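(* Let $q\in\mathbb{N}^+$, let $G=(V,E)$ be a finite $(q+1)$-regular graph (multi-edges and loops allowed), let $\mathcal G$ be a subgroup of the unitary group $U(N)$, and let $\sigma$ be a $\mathcal G$-color on $G$. Then for every $r\in\mathbb{N}$, $$A^\sigma_r=q^{r/2}X_{r,q}(q^{-1/2}A^\sigma).$$
   Context: Each element of $E$ gives two distinct directed edges $e,\overline e$ (mutually inverse), forming $\vec E$, with origin $o(e)$ and terminus $t(e)$; $(q+1)$-regular means every vertex is the origin of exactly $q+1$ directed edges. A walk of length $n\ge1$ is a sequence of directed edges $e_1,\dots,e_n$ with $t(e_i)=o(e_{i+1})$; it is non-backtracking if $e_{i+1}\neq\overline{e_i}$ for all $i$. A $\mathcal G$-color is a map $\sigma:\vec E\to\mathcal G$ with $\sigma(\overline e)=\sigma(e)^{-1}$; the color of a walk $\gamma=(e_1,\dots,e_n)$ is $\sigma_\gamma=\sigma(e_1)\sigma(e_2)\cdots\sigma(e_n)$. $A^\sigma$ is the $N|V|\times N|V|$ block matrix with $N\times N$ blocks $(A^\sigma)_{ij}=\sum_{e\in\vec E: o(e)=i,t(e)=j}\sigma(e)$ (zero block if none). The colored non-backtracking matrix $A^\sigma_r$ is the block matrix with $(A^\sigma_r)_{ij}=\sum_{\gamma}\sigma_\gamma$, summed over all non-backtracking walks $\gamma$ of length $r$ from $i$ to $j$, for $r\ge1$, and $A^\sigma_0=I$. The polynomials $X_{r,q}$ are defined by $\sum_{r\ge0}X_{r,q}(x)t^r=\frac{1-q^{-1}t^2}{1-xt+t^2}$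 for $|t|$ small; explicitly $X_{r,q}=X_r-q^{-1}X_{r-2}$ with $X_r(x)=\sum_{0\le k\le r/2}(-1)^k\binom{r-k}{k}x^{r-2k}$ and $X_r\equiv0$ for $r<0$. *)

theory Defs
  imports "HOL-Analysis.Analysis" "HOL-Computational_Algebra.Polynomial"
begin

text \<open>A finite multigraph (loops and multi-edges allowed) given by its finite type
  'e of directed edges, origin/terminus maps to the vertex type 'v, and the
  fixed-point-free involution e \<mapsto> reversed edge.\<close>

definition multigraph :: "('e::finite \<Rightarrow> 'v::finite) \<Rightarrow> ('e \<Rightarrow> 'v) \<Rightarrow> ('e \<Rightarrow> 'e) \<Rightarrow> bool" where
  "multigraph org trm rv \<longleftrightarrow>
     (\<forall>e. rv (rv e) = e) \<and> (\<forall>e. rv e \<noteq> e) \<and> (\<forall>e. org (rv e) = trm e)"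

definition regular :: "nat \<Rightarrow> ('e::finite \<Rightarrow> 'v::finite) \<Rightarrow> bool" where
  "regular d org \<longleftrightarrow> (\<forall>v. card {e. org e = v} = d)"

definition cadj :: "complex^'n^'n \<Rightarrow> complex^'n^'n" where
  "cadj M = (\<chi> i j. cnj (M $ j $ i))"

definition unitary_mat :: "complex^'n^'n \<Rightarrow> bool" where
  "unitary_mat U \<longleftrightarrow> U ** cadj U = mat 1 \<and> cadj U ** U = mat 1"

definition subgroup_unitary :: "(complex^'n^'n) set \<Rightarrow> bool" where
  "subgroup_unitary \<G> \<longleftrightarrow> \<G> \<subseteq> {U. unitary_mat U} \<and> mat 1 \<in> \<G> \<and>
     (\<forall>A\<in>\<G>. \<forall>B\<in>\<G>. A ** B \<in> \<G>) \<and> (\<forall>A\<in>\<G>. matrix_inv A \<in> \<G>)"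

definition color :: "(complex^'n^'n) set \<Rightarrow> ('e \<Rightarrow> 'e) \<Rightarrow> ('e \<Rightarrow> complex^'n^'n) \<Rightarrow> bool" where
  "color \<G> rv \<sigma> \<longleftrightarrow> (\<forall>e. \<sigma> e \<in> \<G> \<and> \<sigma> (rv e) = matrix_inv (\<sigma> e))"

definition blockmat :: "('v::finite \<Rightarrow> 'v \<Rightarrow> complex^'n^'n) \<Rightarrow> complex^('v \<times> 'n)^('v \<times> 'n)" where
  "blockmat B = (\<chi> p p'. B (fst p) (fst p') $ snd p $ snd p')"

definition adj_colored :: "('e::finite \<Rightarrow> 'v::finite) \<Rightarrow> ('e \<Rightarrow> 'v) \<Rightarrow> ('e \<Rightarrow> complex^'n^'n)
     \<Rightarrow> complex^('v \<times> 'n)^('v \<times> 'n)" where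
  "adj_colored org trm \<sigma> = blockmat (\<lambda>i j. \<Sum>e\<in>{e. org e = i \<and> trm e = j}. \<sigma> e)"

definition nb_walks :: "('e \<Rightarrow> 'v) \<Rightarrow> ('e \<Rightarrow> 'v) \<Rightarrow> ('e \<Rightarrow> 'e) \<Rightarrow> nat \<Rightarrow> 'v \<Rightarrow> 'v \<Rightarrow> 'e list set" where
  "nb_walks org trm rv r i j = {\<gamma>. length \<gamma> = r \<and> \<gamma> \<noteq> [] \<and>
      org (hd \<gamma>) = i \<and> trm (last \<gamma>) = j \<and>
      (\<forall>k. Suc k < r \<longrightarrow> trm (\<gamma> ! k) = org (\<gamma> ! Suc k) \<and> \<gamma> ! Suc k \<noteq> rv (\<gamma> ! k))}"

definition walk_color :: "('e \<Rightarrow> complex^'n^'n) \<Rightarrow> 'e list \<Rightarrow> complex^'n^'n" where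
  "walk_color \<sigma> \<gamma> = foldr (\<lambda>e M. \<sigma> e ** M) \<gamma> (mat 1)"

definition nb_colored :: "('e::finite \<Rightarrow> 'v::finite) \<Rightarrow> ('e \<Rightarrow> 'v) \<Rightarrow> ('e \<Rightarrow> 'e) \<Rightarrow> ('e \<Rightarrow> complex^'n^'n)
     \<Rightarrow> nat \<Rightarrow> complex^('v \<times> 'n)^('v \<times> 'n)" where
  "nb_colored org trm rv \<sigma> r =
     (if r = 0 then mat 1
      else blockmat (\<lambda>i j. \<Sum>\<gamma>\<in>nb_walks org trm rv r i j. walk_color \<sigma> \<gamma>))"

definition Xpoly :: "int \<Rightarrow> real poly" where
  "Xpoly r = (if r < 0 then 0 else
     (\<Sum>k\<in>{k. 2 * k \<le> nat r}. monom ((-1) ^ k * real ((nat r - k) choose k)) (nat r - 2 * k)))"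

definition Xpoly_q :: "nat \<Rightarrow> nat \<Rightarrow> real poly" where
  "Xpoly_q r q = Xpoly (int r) - smult (1 / real q) (Xpoly (int r - 2))"

primrec mpow :: "'a::semiring_1^'m^'m \<Rightarrow> nat \<Rightarrow> 'a^'m^'m" where
  "mpow M 0 = mat 1"
| "mpow M (Suc n) = M ** mpow M n"

definition poly_mat :: "real poly \<Rightarrow> complex^'m^'m \<Rightarrow> complex^'m^'m" where
  "poly_mat p M = (\<Sum>i\<le>degree p. coeff p i *\<^sub>R mpow M i)"

end

theory Submission
  imports Defs
begin

lemma mm_sum_right: "(A::'a::comm_semiring_1^'m^'k) ** sum f S = (\<Sum>x\<in>S. A ** f x)"
  by (simp add: vec_eq_iff matrix_matrix_mult_def sum_distrib_left sum_component; subst sum.swap; simp)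

lemma mm_sum_left: "sum f S ** (B::'a::comm_semiring_1^'m^'k) = (\<Sum>x\<in>S. f x ** B)"
  by (simp add: vec_eq_iff matrix_matrix_mult_def sum_distrib_right sum_component; subst sum.swap; simp)

lemma mm_scale_right: "(A::complex^'m^'k) ** (c *\<^sub>R B) = c *\<^sub>R (A ** B)"
  by (simp add: vec_eq_iff matrix_matrix_mult_def scaleR_sum_right)

lemma mm_diff_right: "(A::'a::comm_ring_1^'m^'k) ** (B - C) = A ** B - A ** C"
  by (simp add: vec_eq_iff matrix_matrix_mult_def sum_subtractf right_diff_distrib)

lemma bm_mul: "blockmat B ** blockmat C = blockmat (\<lambda>i j. \<Sum>k\<in>UNIV. B i k ** C k j)"
proof -
  have "\<And>i a j b. (\<Sum>p\<in>UNIV. B i (fst p) $ a $ snd p * C (fst p) j $ snd p $ b)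
     = (\<Sum>k\<in>UNIV. \<Sum>c\<in>UNIV. B i k $ a $ c * C k j $ c $ b)"
    by (simp add: UNIV_Times_UNIV[symmetric] sum.cartesian_product split_beta del: UNIV_Times_UNIV)
  then show ?thesis
    by (simp add: blockmat_def vec_eq_iff matrix_matrix_mult_def sum_component)
qed

lemma bm_diff: "blockmat B - blockmat C = blockmat (\<lambda>i j. B i j - C i j)"
  by (simp add: blockmat_def vec_eq_iff)

lemma bm_scale: "c *\<^sub>R blockmat B = blockmat (\<lambda>i j. c *\<^sub>R B i j)"
  by (simp add: blockmat_def vec_eq_iff)

lemma bm_one: "mat 1 = blockmat (\<lambda>i j. if i = j then mat 1 else 0)"
  by (auto simp add: blockmat_def vec_eq_iff mat_def prod_eq_iff)


lemma all_Suc_split: "(\<forall>k. Suc k < Suc r \<longrightarrow> P k) \<longleftrightarrow> (0 < r \<longrightarrow> P 0) \<and> (\<forall>k. Suc k < r \<longrightarrow> P (Suc k))"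
  apply auto
  apply (case_tac k; auto)
  done

lemma nbw_Cons:
  assumes "r \<ge> 1"
  shows "(e#\<delta> \<in> nb_walks org trm rv (Suc r) i j) \<longleftrightarrow>
     org e = i \<and> \<delta> \<in> nb_walks org trm rv r (trm e) j \<and> hd \<delta> \<noteq> rv e"
proof -
  have "length \<delta> = r \<Longrightarrow> \<delta> \<noteq> []" using assms by auto
  then show ?thesis using assms
    unfolding nb_walks_def mem_Collect_eq all_Suc_split
    by (auto simp: hd_conv_nth)
qed

lemma nbw_Suc:
  assumes "r \<ge> 1"
  shows "nb_walks org trm rv (Suc r) i j = (\<lambda>(e,\<delta>). e#\<delta>) `
     (SIGMA e:{e. org e = i}. {\<delta> \<in> nb_walks org trm rv r (trm e) j. hd \<delta> \<noteq> rv e})"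
proof -
  have "\<gamma> \<in> nb_walks org trm rv (Suc r) i j \<Longrightarrow> \<exists>e \<delta>. \<gamma> = e#\<delta>" for \<gamma>
    unfolding nb_walks_def by (cases \<gamma>) auto
  note ex = this
  note C = nbw_Cons[OF assms]
  show ?thesis
  proof (intro equalityI subsetI)
    fix \<gamma> assume g: "\<gamma> \<in> nb_walks org trm rv (Suc r) i j"
    then obtain e \<delta> where ge: "\<gamma> = e#\<delta>" using ex by blast
    have "org e = i \<and> \<delta> \<in> nb_walks org trm rv r (trm e) j \<and> hd \<delta> \<noteq> rv e"
      using C[of e \<delta> org trm rv i j] g ge by simp
    then show "\<gamma> \<in> (\<lambda>(e,\<delta>). e#\<delta>) `
     (SIGMA e:{e. org e = i}. {\<delta> \<in> nb_walks org trm rv r (trm e) j. hd \<delta> \<noteq> rv e})"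
      using ge by (auto simp: image_iff)
  next
    fix \<gamma> assume "\<gamma> \<in> (\<lambda>(e,\<delta>). e#\<delta>) `
     (SIGMA e:{e. org e = i}. {\<delta> \<in> nb_walks org trm rv r (trm e) j. hd \<delta> \<noteq> rv e})"
    then obtain e \<delta> where "\<gamma> = e#\<delta>" "org e = i" "\<delta> \<in> nb_walks org trm rv r (trm e) j" "hd \<delta> \<noteq> rv e"
      by auto
    then show "\<gamma> \<in> nb_walks org trm rv (Suc r) i j" using C[of e \<delta> org trm rv i j] by simp
  qed
qed

lemma nbw_one: "nb_walks org trm rv 1 i j = (\<lambda>e. [e]) ` {e. org e = i \<and> trm e = j}"
  unfolding nb_walks_def
  apply (auto simp: image_iff)
  apply (case_tac x; auto)
  done

lemma nbw_finite: "finite (nb_walks (org::'e::finite \<Rightarrow> 'v) trm rv r i j)"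
proof -
  have "nb_walks org trm rv r i j \<subseteq> {xs. set xs \<subseteq> UNIV \<and> length xs = r}"
    unfolding nb_walks_def by auto
  then show ?thesis using finite_lists_length_eq[of "UNIV::'e set" r] finite_subset by auto
qed

lemma wc_Cons[simp]: "walk_color \<sigma> (e#\<gamma>) = \<sigma> e ** walk_color \<sigma> \<gamma>"
  by (simp add: walk_color_def)

lemma wc_Nil[simp]: "walk_color \<sigma> [] = mat 1"
  by (simp add: walk_color_def)


definition Ws :: "('e::finite \<Rightarrow> 'v::finite) \<Rightarrow> ('e \<Rightarrow> 'v) \<Rightarrow> ('e \<Rightarrow> 'e) \<Rightarrow> ('e \<Rightarrow> complex^'n^'n)
     \<Rightarrow> nat \<Rightarrow> 'v \<Rightarrow> 'v \<Rightarrow> complex^'n^'n" where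
  "Ws org trm rv \<sigma> r i j = (\<Sum>\<gamma>\<in>nb_walks org trm rv r i j. walk_color \<sigma> \<gamma>)"

definition Ab :: "('e::finite \<Rightarrow> 'v::finite) \<Rightarrow> ('e \<Rightarrow> 'v) \<Rightarrow> ('e \<Rightarrow> complex^'n^'n)
     \<Rightarrow> 'v \<Rightarrow> 'v \<Rightarrow> complex^'n^'n" where
  "Ab org trm \<sigma> i j = (\<Sum>e\<in>{e. org e = i \<and> trm e = j}. \<sigma> e)"

lemma unitary_inv: "unitary_mat U \<Longrightarrow> U ** matrix_inv U = mat 1"
  unfolding matrix_inv_def unitary_mat_def
  by (rule someI2[of _ "cadj U"]) auto

lemma Ws_one: "Ws org trm rv \<sigma> 1 i j = Ab org trm \<sigma> i j"
  unfolding Ws_def Ab_def nbw_one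
  by (subst sum.reindex) (auto simp: inj_on_def)

lemma Ws_Suc:
  assumes "r \<ge> 1"
  shows "Ws org trm rv \<sigma> (Suc r) i j = (\<Sum>e\<in>{e. org e = i}.
      \<Sum>\<delta>\<in>{\<delta> \<in> nb_walks org trm rv r (trm e) j. hd \<delta> \<noteq> rv e}. \<sigma> e ** walk_color \<sigma> \<delta>)"
  unfolding Ws_def nbw_Suc[OF assms]
  apply (subst sum.reindex)
   apply (auto simp: inj_on_def)[1]
  apply (subst sum.Sigma)
    apply (auto simp: nbw_finite split_beta comp_def)
  done

lemma Ab_mul: "(\<Sum>k\<in>UNIV. Ab org trm \<sigma> i k ** M k) = (\<Sum>e\<in>{e. org e = i}. \<sigma> e ** M (trm e))"
proof -
  have "(\<Sum>k\<in>UNIV. Ab org trm \<sigma> i k ** M k) = (\<Sum>k\<in>UNIV. \<Sum>e\<in>{e. e \<in> {e. org e = i} \<and> trm e = k}. \<sigma> e ** M (trm e))"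
    unfolding Ab_def mm_sum_left by (intro sum.cong) auto
  also have "\<dots> = (\<Sum>e\<in>{e. org e = i}. \<sigma> e ** M (trm e))"
    by (rule sum.group) auto
  finally show ?thesis .
qed


lemma sum_split_filter:
  "finite A \<Longrightarrow> sum f A = sum f {x\<in>A. \<not> P x} + sum f {x\<in>A. P x}"
  by (auto simp: sum.inter_filter sum.distrib[symmetric] intro!: sum.cong)

lemma Ws_mul:
  assumes "r \<ge> 1"
  shows "(\<Sum>k\<in>UNIV. Ab org trm \<sigma> i k ** Ws org trm rv \<sigma> r k j) =
    Ws org trm rv \<sigma> (Suc r) i j + (\<Sum>e\<in>{e. org e = i}.
      \<Sum>\<delta>\<in>{\<delta> \<in> nb_walks org trm rv r (trm e) j. hd \<delta> = rv e}. \<sigma> e ** walk_color \<sigma> \<delta>)"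
  unfolding Ab_mul Ws_Suc[OF assms] sum.distrib[symmetric]
proof (intro sum.cong refl)
  fix e
  show "\<sigma> e ** Ws org trm rv \<sigma> r (trm e) j =
         (\<Sum>\<delta>\<in>{\<delta> \<in> nb_walks org trm rv r (trm e) j. hd \<delta> \<noteq> rv e}. \<sigma> e ** walk_color \<sigma> \<delta>) +
         (\<Sum>\<delta>\<in>{\<delta> \<in> nb_walks org trm rv r (trm e) j. hd \<delta> = rv e}. \<sigma> e ** walk_color \<sigma> \<delta>)"
    unfolding Ws_def mm_sum_right
    by (rule sum_split_filter[OF nbw_finite, where P = "\<lambda>\<delta>. hd \<delta> = rv e"])
qed

lemma card_out:
  assumes "regular (q + 1) org"
  shows "card {e. org e = i} = q + 1"
  using assms unfolding regular_def by auto

lemma back_one: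
  assumes mg: "multigraph org trm rv" and reg: "regular (q + 1) org"
    and inv: "\<And>e. \<sigma> e ** \<sigma> (rv e) = mat 1"
  shows "(\<Sum>e\<in>{e. org e = i}.
      \<Sum>\<delta>\<in>{\<delta> \<in> nb_walks org trm rv 1 (trm e) j. hd \<delta> = rv e}. \<sigma> e ** walk_color \<sigma> \<delta>)
     = (if i = j then real (q + 1) *\<^sub>R mat 1 else 0)"
proof -
  have tr: "trm (rv e) = org e" for e using mg unfolding multigraph_def by metis
  have S: "{\<delta> \<in> nb_walks org trm rv 1 (trm e) j. hd \<delta> = rv e} = (if org e = j then {[rv e]} else {})" for e
    unfolding nbw_one using tr mg unfolding multigraph_def by (auto simp: image_iff)
  have "(\<Sum>e\<in>{e. org e = i}.
      \<Sum>\<delta>\<in>{\<delta> \<in> nb_walks org trm rv 1 (trm e) j. hd \<delta> = rv e}. \<sigma> e ** walk_color \<sigma> \<delta>)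
      = (\<Sum>e\<in>{e. org e = i}. if i = j then mat 1 else 0)"
    unfolding S by (intro sum.cong refl) (auto simp: inv)
  also have "\<dots> = (if i = j then real (q + 1) *\<^sub>R mat 1 else 0)"
    using card_out[OF reg, of i] by (simp add: sum_constant_scaleR del: sum_constant)
  finally show ?thesis .
qed

lemma back_Suc:
  assumes mg: "multigraph org trm rv" and reg: "regular (q + 1) org"
    and inv: "\<And>e. \<sigma> e ** \<sigma> (rv e) = mat 1" and s: "s \<ge> 1"
  shows "(\<Sum>e\<in>{e. org e = i}.
      \<Sum>\<delta>\<in>{\<delta> \<in> nb_walks org trm rv (Suc s) (trm e) j. hd \<delta> = rv e}. \<sigma> e ** walk_color \<sigma> \<delta>)
     = real q *\<^sub>R Ws org trm rv \<sigma> s i j"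
proof -
  have tr: "trm (rv e) = org e" for e using mg unfolding multigraph_def by metis
  have ot: "org (rv e) = trm e" and rr: "rv (rv e) = e" for e using mg unfolding multigraph_def by auto
  have S: "{\<delta> \<in> nb_walks org trm rv (Suc s) (trm e) j. hd \<delta> = rv e}
     = (Cons (rv e)) ` {\<delta> \<in> nb_walks org trm rv s (org e) j. hd \<delta> \<noteq> e}" for e
  proof (intro equalityI subsetI)
    fix \<gamma> assume g: "\<gamma> \<in> {\<delta> \<in> nb_walks org trm rv (Suc s) (trm e) j. hd \<delta> = rv e}"
    then have "\<gamma> \<noteq> []" unfolding nb_walks_def by auto
    then obtain \<delta> where gd: "\<gamma> = rv e # \<delta>" using g by (cases \<gamma>) auto
    then show "\<gamma> \<in> (Cons (rv e)) ` {\<delta> \<in> nb_walks org trm rv s (org e) j. hd \<delta> \<noteq> e}"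
      using g nbw_Cons[OF s, of "rv e" \<delta> org trm rv "trm e" j] tr rr by auto
  next
    fix \<gamma> assume "\<gamma> \<in> (Cons (rv e)) ` {\<delta> \<in> nb_walks org trm rv s (org e) j. hd \<delta> \<noteq> e}"
    then obtain \<delta> where gd: "\<gamma> = rv e # \<delta>" "\<delta> \<in> nb_walks org trm rv s (org e) j" "hd \<delta> \<noteq> e"
      by auto
    then show "\<gamma> \<in> {\<delta> \<in> nb_walks org trm rv (Suc s) (trm e) j. hd \<delta> = rv e}"
      using nbw_Cons[OF s, of "rv e" \<delta> org trm rv "trm e" j] tr rr ot by auto
  qed
  have "(\<Sum>e\<in>{e. org e = i}.
      \<Sum>\<delta>\<in>{\<delta> \<in> nb_walks org trm rv (Suc s) (trm e) j. hd \<delta> = rv e}. \<sigma> e ** walk_color \<sigma> \<delta>)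
    = (\<Sum>e\<in>{e. org e = i}. \<Sum>\<delta>\<in>{\<delta> \<in> nb_walks org trm rv s i j. hd \<delta> \<noteq> e}. walk_color \<sigma> \<delta>)"
  proof (rule sum.cong[OF refl])
    fix e assume "e \<in> {e. org e = i}"
    then have oe: "org e = i" by simp
    show "(\<Sum>\<delta>\<in>{\<delta> \<in> nb_walks org trm rv (Suc s) (trm e) j. hd \<delta> = rv e}. \<sigma> e ** walk_color \<sigma> \<delta>)
      = (\<Sum>\<delta>\<in>{\<delta> \<in> nb_walks org trm rv s i j. hd \<delta> \<noteq> e}. walk_color \<sigma> \<delta>)"
      unfolding S oe
      by (subst sum.reindex) (auto simp: inj_on_def matrix_mul_assoc inv)
  qed
  also have "\<dots> = (\<Sum>\<delta>\<in>nb_walks org trm rv s i j. \<Sum>e\<in>{e. org e = i \<and> hd \<delta> \<noteq> e}. walk_color \<sigma> \<delta>)"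
    using sum.swap_restrict[of "{e. org e = i}" "nb_walks org trm rv s i j"
        "\<lambda>e \<delta>. walk_color \<sigma> \<delta>" "\<lambda>e \<delta>. hd \<delta> \<noteq> e"]
    by (simp add: nbw_finite conj_commute)
  also have "\<dots> = (\<Sum>\<delta>\<in>nb_walks org trm rv s i j. real q *\<^sub>R walk_color \<sigma> \<delta>)"
  proof (intro sum.cong refl)
    fix \<delta> assume d: "\<delta> \<in> nb_walks org trm rv s i j"
    then have "org (hd \<delta>) = i" unfolding nb_walks_def by auto
    then have "{e. org e = i \<and> hd \<delta> \<noteq> e} = {e. org e = i} - {hd \<delta>}" "hd \<delta> \<in> {e. org e = i}" by auto
    then have "card {e. org e = i \<and> hd \<delta> \<noteq> e} = q" using card_out[OF reg, of i] by simp
    then show "(\<Sum>e\<in>{e. org e = i \<and> hd \<delta> \<noteq> e}. walk_color \<sigma> \<delta>) = real q *\<^sub>R walk_color \<sigma> \<delta>"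
      by (simp add: sum_constant_scaleR del: sum_constant)
  qed
  also have "\<dots> = real q *\<^sub>R Ws org trm rv \<sigma> s i j"
    unfolding Ws_def by (simp add: scaleR_sum_right)
  finally show ?thesis .
qed


lemma Xpoly_coeff:
  "coeff (Xpoly (int m)) n = (if n \<le> m \<and> even (m - n)
     then (-1) ^ ((m - n) div 2) * real ((m - (m - n) div 2) choose ((m - n) div 2)) else 0)"
proof -
  define c where "c k = (-1) ^ k * real ((m - k) choose k)" for k
  have S: "{k. 2 * k \<le> m} = {..m div 2}" by auto
  have "coeff (Xpoly (int m)) n = (\<Sum>k\<in>{..m div 2}. if m - 2 * k = n then c k else 0)"
    unfolding Xpoly_def c_def by (simp add: coeff_sum coeff_monom S)
  also have "\<dots> = (\<Sum>k\<in>{..m div 2}. if n \<le> m \<and> even (m - n) then (if k = (m - n) div 2 then c k else 0) else 0)"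
  proof (intro sum.cong refl)
    fix k assume "k \<in> {..m div 2}"
    then have "k \<le> m div 2" by simp
    then have "(m - 2 * k = n) = (n \<le> m \<and> even (m - n) \<and> k = (m - n) div 2)"
      by presburger
    then show "(if m - 2 * k = n then c k else 0) =
      (if n \<le> m \<and> even (m - n) then (if k = (m - n) div 2 then c k else 0) else 0)"
      by auto
  qed
  also have "\<dots> = (if n \<le> m \<and> even (m - n) then c ((m - n) div 2) else 0)"
  proof (cases "n \<le> m \<and> even (m - n)")
    case True
    have "(m - n) div 2 \<in> {..m div 2}" by (simp add: div_le_mono)
    then show ?thesis using True by (simp only: if_True sum.delta finite_atMost) simp
  next
    case False
    then show ?thesis by (simp only: if_False sum.neutral_const)
  qed
  finally show ?thesis unfolding c_def .
qed

lemma X_mult: "[:0,1:] * (p::real poly) = pCons 0 p"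
  by (simp add: smult_1_left)

lemma Xpoly_neg: "r < 0 \<Longrightarrow> Xpoly r = 0"
  by (simp add: Xpoly_def)

lemma Xpoly_0: "Xpoly 0 = 1"
  using Xpoly_coeff[of 0] by (intro poly_eqI) (auto simp: coeff_1)

lemma Xpoly_1: "Xpoly 1 = [:0,1:]"
proof (intro poly_eqI)
  fix n show "coeff (Xpoly 1) n = coeff [:0,1:] n"
    using Xpoly_coeff[of 1 n] by (cases n; cases "n - 1") auto
qed

lemma Xpoly_rec_nat: "Xpoly (int (m + 2)) = [:0,1:] * Xpoly (int (m + 1)) - Xpoly (int m)"
proof (intro poly_eqI)
  fix n
  show "coeff (Xpoly (int (m + 2))) n = coeff ([:0,1:] * Xpoly (int (m + 1)) - Xpoly (int m)) n"
  proof (cases n)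
    case 0
    have L0: "coeff ([:0,1:] * Xpoly (int (m + 1)) - Xpoly (int m)) 0 = - coeff (Xpoly (int m)) 0"
      by (simp add: X_mult)
    show ?thesis
    proof (cases "even m")
      case True
      then obtain t where t: "m = 2 * t" by auto
      have a: "(m + 2) div 2 = Suc t" "m div 2 = t" "m + 2 - Suc t = Suc t" "m - t = t" "Suc m - t = Suc t" "Suc (Suc m) div 2 = Suc t" using t by auto
      show ?thesis using True unfolding 0 L0 Xpoly_coeff by (simp add: a)
    next
      case False
      then show ?thesis unfolding 0 L0 Xpoly_coeff by simp
    qed
  next
    case (Suc n')
    have L: "coeff ([:0,1:] * Xpoly (int (m + 1)) - Xpoly (int m)) n =
       coeff (Xpoly (int (m + 1))) n' - coeff (Xpoly (int m)) (Suc n')"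
      unfolding Suc by (simp add: X_mult)
    show ?thesis
    proof (cases "n' \<le> m + 1 \<and> even (m + 1 - n')")
      case False
      have c1: "\<not> (Suc n' \<le> m + 2 \<and> even (m + 2 - Suc n'))" using False by auto
      have c3: "\<not> (n' \<le> m + 1 \<and> even (m + 1 - n'))" using False by auto
      have c2: "\<not> (Suc n' \<le> m \<and> even (m - Suc n'))"
      proof
        assume h: "Suc n' \<le> m \<and> even (m - Suc n')"
        then have "m + 1 - n' = (m - Suc n') + 2" by arith
        then show False using h False by auto
      qed
      show ?thesis unfolding L unfolding Suc Xpoly_coeff by (simp only: c1 c2 c3 if_False diff_zero)
    next
      case True
      then have "even (m + 1 - n')" by blast
      then obtain k where "m + 1 - n' = 2 * k" by (rule evenE)
      then have k: "m + 1 = n' + 2 * k" using True by arith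
      show ?thesis
      proof (cases k)
        case 0
        then have "m + 1 = n'" using k by simp
        then show ?thesis unfolding L unfolding Suc Xpoly_coeff by simp
      next
        case (Suc t)
        then have m: "m = n' + 2 * t + 1" using k by simp
        have a: "(Suc n' \<le> m + 2 \<and> even (m + 2 - Suc n')) = True"
          "(n' \<le> m + 1 \<and> even (m + 1 - n')) = True"
          "(Suc n' \<le> m \<and> even (m - Suc n')) = True"
          "(m + 2 - Suc n') div 2 = Suc t" "(m + 1 - n') div 2 = Suc t" "(m - Suc n') div 2 = t"
          "m + 2 - Suc t = Suc (Suc (n' + t))" "m + 1 - Suc t = Suc (n' + t)" "m - t = Suc (n' + t)"
          using m by auto
        have b: "(Suc (Suc (n' + t)) choose Suc t) = (Suc (n' + t) choose Suc t) + (Suc (n' + t) choose t)"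
          by simp
        show ?thesis unfolding L unfolding \<open>n = Suc n'\<close> Xpoly_coeff
          by (simp only: a if_True b) (simp add: algebra_simps)
      qed
    qed
  qed
qed

lemma Xpoly_rec: "r \<ge> 0 \<Longrightarrow> Xpoly (r + 1) = [:0,1:] * Xpoly r - Xpoly (r - 1)"
proof -
  assume r: "r \<ge> 0"
  show ?thesis
  proof (cases "r = 0")
    case True then show ?thesis by (simp add: Xpoly_0 Xpoly_1 Xpoly_neg)
  next
    case False
    define m where "m = nat r - 1"
    have m: "r = int (m + 1)" using r False unfolding m_def by auto
    show ?thesis using Xpoly_rec_nat[of m] unfolding m by (simp add: add.commute)
  qed
qed


lemma Xq_rec:
  assumes "r \<ge> 1"
  shows "Xpoly_q (r + 2) q = [:0,1:] * Xpoly_q (r + 1) q - Xpoly_q r q"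
proof -
  have e1: "Xpoly (int r + 2) = [:0,1:] * Xpoly (int r + 1) - Xpoly (int r)"
    using Xpoly_rec[of "int r + 1"] by (simp add: add.assoc)
  have e2: "Xpoly (int r) = [:0,1:] * Xpoly (int r - 1) - Xpoly (int r - 2)"
    using Xpoly_rec[of "int r - 1"] assms by simp
  have i: "int (r + 2) = int r + 2" "int (r + 1) - 2 = int r - 1" "int r + 2 - 2 = int r"
    "int (r + 1) = int r + 1" by auto
  have e3: "smult (1 / real q) (Xpoly (int r)) =
      [:0,1:] * smult (1 / real q) (Xpoly (int r - 1)) - smult (1 / real q) (Xpoly (int r - 2))"
    by (subst e2) (simp add: smult_diff_right mult_smult_right)
  show ?thesis unfolding Xpoly_q_def i e1 e3
    by (simp add: algebra_simps)
qed

lemma Xq_0: "Xpoly_q 0 q = 1"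
  by (simp add: Xpoly_q_def Xpoly_0 Xpoly_neg)

lemma Xq_1: "Xpoly_q 1 q = [:0,1:] * 1"
  by (simp add: Xpoly_q_def Xpoly_1 Xpoly_neg)

lemma Xq_2: "Xpoly_q 2 q = [:0,1:] * ([:0,1:] * 1) - 1 - smult (1 / real q) 1"
proof -
  have "Xpoly 2 = [:0,1:] * Xpoly 1 - Xpoly 0" using Xpoly_rec[of 1] by simp
  then show ?thesis by (simp add: Xpoly_q_def Xpoly_0 Xpoly_1)
qed

lemma pm_sum:
  assumes "degree p \<le> n"
  shows "poly_mat p M = (\<Sum>i\<le>n. coeff p i *\<^sub>R mpow M i)"
  unfolding poly_mat_def
  by (rule sum.mono_neutral_left) (use assms in \<open>auto simp: coeff_eq_0\<close>)

lemma pm_diff: "poly_mat (p - q) M = poly_mat p M - poly_mat q M"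
proof -
  define n where "n = max (degree p) (degree q)"
  have "degree (p - q) \<le> n" unfolding n_def by (rule degree_diff_le_max)
  then show ?thesis
    using pm_sum[of p n M] pm_sum[of q n M] pm_sum[of "p - q" n M] unfolding n_def
    by (simp add: scaleR_left_diff_distrib sum_subtractf)
qed

lemma pm_smult: "poly_mat (smult c p) M = c *\<^sub>R poly_mat p M"
proof -
  have "degree (smult c p) \<le> degree p" by (rule degree_smult_le)
  then show ?thesis using pm_sum[of "smult c p" "degree p" M]
    by (simp add: poly_mat_def scaleR_sum_right)
qed

lemma pm_one: "poly_mat 1 M = mat 1"
  by (simp add: poly_mat_def)

lemma pm_X: "poly_mat ([:0,1:] * p) M = M ** poly_mat p M"
proof -
  have d: "degree ([:0,1:] * p) \<le> Suc (degree p)"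
    unfolding X_mult by (simp add: degree_pCons_le)
  have "poly_mat ([:0,1:] * p) M = (\<Sum>i\<le>Suc (degree p). coeff ([:0,1:] * p) i *\<^sub>R mpow M i)"
    by (rule pm_sum[OF d])
  also have "\<dots> = (\<Sum>i\<le>degree p. coeff p i *\<^sub>R (M ** mpow M i))"
    unfolding X_mult by (simp add: sum.atMost_Suc_shift del: sum.atMost_Suc)
  also have "\<dots> = M ** poly_mat p M"
    unfolding poly_mat_def mm_sum_right mm_scale_right ..
  finally show ?thesis .
qed

lemma mm_scale_left: "(c *\<^sub>R A :: complex^'m^'k) ** B = c *\<^sub>R (A ** B)"
  by (simp add: vec_eq_iff matrix_matrix_mult_def scaleR_sum_right)


lemma bm_add: "blockmat (\<lambda>i j. X i j + Y i j) = blockmat X + blockmat Y"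
  by (simp add: blockmat_def vec_eq_iff)

lemma N_blk: "r \<ge> 1 \<Longrightarrow> nb_colored org trm rv \<sigma> r = blockmat (Ws org trm rv \<sigma> r)"
  unfolding nb_colored_def Ws_def by (simp add: fun_eq_iff)

lemma A_blk: "adj_colored org trm \<sigma> = blockmat (Ab org trm \<sigma>)"
  unfolding adj_colored_def Ab_def ..

lemma N_1: "nb_colored org trm rv \<sigma> 1 = adj_colored org trm \<sigma>"
proof -
  have "Ws org trm rv \<sigma> 1 = Ab org trm \<sigma>" by (intro ext) (rule Ws_one)
  then show ?thesis unfolding N_blk[OF order_refl] A_blk by simp
qed

lemma N_rec1:
  assumes mg: "multigraph org trm rv" and reg: "regular (q + 1) org"
    and inv: "\<And>e. \<sigma> e ** \<sigma> (rv e) = mat 1"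
  shows "nb_colored org trm rv \<sigma> 2 =
    adj_colored org trm \<sigma> ** nb_colored org trm rv \<sigma> 1 - real (q + 1) *\<^sub>R mat 1"
proof -
  have "adj_colored org trm \<sigma> ** nb_colored org trm rv \<sigma> 1 =
    blockmat (\<lambda>i j. Ws org trm rv \<sigma> 2 i j + (if i = j then real (q + 1) *\<^sub>R mat 1 else 0))"
  proof -
    have W: "(\<Sum>k\<in>UNIV. Ab org trm \<sigma> i k ** Ws org trm rv \<sigma> 1 k j) =
      Ws org trm rv \<sigma> 2 i j + (if i = j then real (q + 1) *\<^sub>R mat 1 else 0)" for i j
      using Ws_mul[where r=1 and org=org and trm=trm and rv=rv and \<sigma>=\<sigma> and i=i and j=j]
        back_one[where org=org and trm=trm and rv=rv and q=q and \<sigma>=\<sigma> and i=i and j=j, OF mg reg inv]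
      by (simp add: numeral_2_eq_2)
    show ?thesis unfolding A_blk N_blk[OF order_refl] bm_mul W ..
  qed
  also have "\<dots> = nb_colored org trm rv \<sigma> 2 + real (q + 1) *\<^sub>R mat 1"
    unfolding bm_add N_blk[of 2, simplified] bm_one bm_scale
    by (simp add: if_distrib cong: if_cong)
  finally show ?thesis by simp
qed

lemma N_rec:
  assumes mg: "multigraph org trm rv" and reg: "regular (q + 1) org"
    and inv: "\<And>e. \<sigma> e ** \<sigma> (rv e) = mat 1" and s: "s \<ge> 1"
  shows "nb_colored org trm rv \<sigma> (s + 2) =
    adj_colored org trm \<sigma> ** nb_colored org trm rv \<sigma> (s + 1) - real q *\<^sub>R nb_colored org trm rv \<sigma> s"
proof -
  have "adj_colored org trm \<sigma> ** nb_colored org trm rv \<sigma> (s + 1) =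
    blockmat (\<lambda>i j. Ws org trm rv \<sigma> (s + 2) i j + real q *\<^sub>R Ws org trm rv \<sigma> s i j)"
  proof -
    have W: "(\<Sum>k\<in>UNIV. Ab org trm \<sigma> i k ** Ws org trm rv \<sigma> (s + 1) k j) =
      Ws org trm rv \<sigma> (s + 2) i j + real q *\<^sub>R Ws org trm rv \<sigma> s i j" for i j
      using Ws_mul[where r="Suc s" and org=org and trm=trm and rv=rv and \<sigma>=\<sigma> and i=i and j=j]
        back_Suc[where org=org and trm=trm and rv=rv and q=q and \<sigma>=\<sigma> and i=i and j=j, OF mg reg inv s]
      by simp
    have s1: "s + 1 \<ge> 1" by simp
    show ?thesis unfolding A_blk N_blk[OF s1] bm_mul W ..
  qed
  also have "\<dots> = nb_colored org trm rv \<sigma> (s + 2) + real q *\<^sub>R nb_colored org trm rv \<sigma> s"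
    using N_blk[of "s + 2" org trm rv \<sigma>] N_blk[OF s, of org trm rv \<sigma>] unfolding bm_add by (simp add: bm_scale)
  finally show ?thesis by simp
qed


theorem lemma3p1:
  fixes q :: nat
    and org trm :: "'e::finite \<Rightarrow> 'v::finite"
    and rv :: "'e \<Rightarrow> 'e"
    and \<G> :: "(complex^'n^'n) set"
    and \<sigma> :: "'e \<Rightarrow> complex^'n^'n"
    and r :: nat
  assumes "q \<ge> 1"
    and "multigraph org trm rv"
    and "regular (q + 1) org"
    and "subgroup_unitary \<G>"
    and "color \<G> rv \<sigma>"
  shows "nb_colored org trm rv \<sigma> r =
    (sqrt (real q) ^ r) *\<^sub>R poly_mat (Xpoly_q r q) ((1 / sqrt (real q)) *\<^sub>R adj_colored org trm \<sigma>)"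
proof -
  note q = assms(1) and mg = assms(2) and reg = assms(3)
  have inv: "\<sigma> e ** \<sigma> (rv e) = mat 1" for e
  proof -
    have "\<sigma> e \<in> \<G>" "\<sigma> (rv e) = matrix_inv (\<sigma> e)" using assms(5) unfolding color_def by auto
    moreover have "unitary_mat (\<sigma> e)" using calculation(1) assms(4) unfolding subgroup_unitary_def by auto
    ultimately show ?thesis using unitary_inv by simp
  qed
  define A where "A = adj_colored org trm \<sigma>"
  define s where "s = sqrt (real q)"
  define c where "c = 1 / s"
  define N where "N r = nb_colored org trm rv \<sigma> r" for r
  define B where "B r = s ^ r *\<^sub>R poly_mat (Xpoly_q r q) (c *\<^sub>R A)" for r
  have s0: "s > 0" unfolding s_def using q by simp
  have sc: "s * c = 1" unfolding c_def using s0 by simp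
  have ss: "s * s = real q" unfolding s_def by simp
  have B0: "B 0 = mat 1" unfolding B_def by (simp add: Xq_0 pm_one)
  have B1: "B 1 = A" unfolding B_def Xq_1 pm_X pm_one by (simp add: mm_scale_left sc)
  have B2: "B 2 = A ** A - real (q + 1) *\<^sub>R mat 1"
  proof -
    have "B 2 = (s * s) *\<^sub>R ((c * c) *\<^sub>R (A ** A) - mat 1 - (1 / real q) *\<^sub>R mat 1)"
      unfolding B_def Xq_2 pm_diff pm_X pm_one pm_smult
      by (simp add: mm_scale_left mm_scale_right power2_eq_square)
    also have "\<dots> = ((s * c) * (s * c)) *\<^sub>R (A ** A) - (s * s) *\<^sub>R mat 1 - ((s * s) / real q) *\<^sub>R mat 1"
      by (simp add: algebra_simps)
    also have "\<dots> = A ** A - real (q + 1) *\<^sub>R mat 1"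
      unfolding sc ss using q by (simp add: algebra_simps)
    finally show ?thesis .
  qed
  have Brec: "B (k + 2) = A ** B (k + 1) - real q *\<^sub>R B k" if k: "k \<ge> 1" for k
  proof -
    have "B (k + 2) = s ^ (k + 2) *\<^sub>R ((c *\<^sub>R A) ** poly_mat (Xpoly_q (k + 1) q) (c *\<^sub>R A)
        - poly_mat (Xpoly_q k q) (c *\<^sub>R A))"
      unfolding B_def Xq_rec[OF k] pm_diff pm_X ..
    also have "\<dots> = (s * c) *\<^sub>R (A ** (s ^ (k + 1) *\<^sub>R poly_mat (Xpoly_q (k + 1) q) (c *\<^sub>R A)))
        - (s * s) *\<^sub>R (s ^ k *\<^sub>R poly_mat (Xpoly_q k q) (c *\<^sub>R A))"
      by (simp add: mm_scale_left mm_scale_right algebra_simps power_add power2_eq_square)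
    also have "\<dots> = A ** B (k + 1) - real q *\<^sub>R B k"
      unfolding sc ss B_def by simp
    finally show ?thesis .
  qed
  have N0: "N 0 = mat 1" unfolding N_def nb_colored_def by simp
  have N1: "N 1 = A" unfolding N_def A_def by (rule N_1)
  have N2: "N 2 = A ** A - real (q + 1) *\<^sub>R mat 1"
    using N_rec1[where \<sigma>=\<sigma>, OF mg reg inv] unfolding N_def A_def N_1 .
  have Nrec: "N (k + 2) = A ** N (k + 1) - real q *\<^sub>R N k" if k: "k \<ge> 1" for k
    using N_rec[where \<sigma>=\<sigma>, OF mg reg inv k] unfolding N_def A_def .
  have "N k = B k \<and> N (Suc k) = B (Suc k)" for k
  proof (induction k)
    case 0 then show ?case using N0 N1 B0 B1 by simp
  next
    case (Suc k)
    show ?case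
    proof (cases "k = 0")
      case True then show ?thesis using N1 B1 N2 B2 by (simp add: numeral_2_eq_2)
    next
      case False
      then have "N (k + 2) = B (k + 2)" using Nrec[of k] Brec[of k] Suc.IH by simp
      then show ?thesis using Suc.IH by simp
    qed
  qed
  then show ?thesis unfolding N_def B_def A_def s_def c_def by blast
qed

end
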